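(* Let $A_1,A_2,A_3\subset\mathbb{R}^3$ be finite sets with $|A_1|=3$, $|A_2|=2$, $|A_3|=1$ such that $A_1\cup A_2\cup A_3$ is a set of $6$ points in general position. Then there is a unique triple of mutually orthogonal affine planes $H_1,H_2,H_3$ with $A_i\subset H_i$ for $i=1,2,3$.
   Context: A finite set $X\subset\mathbb{R}^3$ is in general position if no $3$ points of $X$ are collinear, no $4$ are coplanar, no $6$ lie in the union of $2$ orthogonal planes, and no $7$ lie in the union of $3$ mutually orthogonal planes. Affine planes are (mutually) orthogonal if their normal vectors are pairwise orthogonal. *)

theory Defs
  imports "HOL-Analysis.Analysis"
begin

definition affine_plane :: "(real^3) set \<Rightarrow> bool" where
  "affine_plane H \<longleftrightarrow> (\<exists>a b. a \<noteq> 0 \<and> H = {x. a \<bullet> x = b})"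

definition orth_planes :: "(real^3) set \<Rightarrow> (real^3) set \<Rightarrow> bool" where
  "orth_planes H K \<longleftrightarrow> (\<exists>a b c d. a \<noteq> 0 \<and> c \<noteq> 0 \<and> H = {x. a \<bullet> x = b} \<and>
      K = {x. c \<bullet> x = d} \<and> a \<bullet> c = 0)"

definition mutually_orth_planes :: "(real^3) set \<Rightarrow> (real^3) set \<Rightarrow> (real^3) set \<Rightarrow> bool" where
  "mutually_orth_planes H1 H2 H3 \<longleftrightarrow>
     orth_planes H1 H2 \<and> orth_planes H1 H3 \<and> orth_planes H2 H3"

definition general_position :: "(real^3) set \<Rightarrow> bool" where
  "general_position X \<longleftrightarrow> finite X \<and>
     (\<forall>S\<subseteq>X. card S = 3 \<longrightarrow> \<not> collinear S) \<and>
     (\<forall>S\<subseteq>X. card S = 4 \<longrightarrow> \<not> coplanar S) \<and>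
     (\<forall>H K. orth_planes H K \<longrightarrow> \<not> (\<exists>S\<subseteq>X. card S = 6 \<and> S \<subseteq> H \<union> K)) \<and>
     (\<forall>H1 H2 H3. mutually_orth_planes H1 H2 H3 \<longrightarrow>
        \<not> (\<exists>S\<subseteq>X. card S = 7 \<and> S \<subseteq> H1 \<union> H2 \<union> H3))"

end

theory Submission
  imports Defs "HOL-Analysis.Cross3"
begin

lemma L2:
  fixes a u w :: "real^3"
  assumes "a \<bullet> u = 0" "a \<bullet> w = 0" "cross3 u w \<noteq> 0"
  shows "\<exists>k. a = k *\<^sub>R (cross3 u w)"
proof -
  have "cross3 a (cross3 u w) = 0" using assms by (simp add: Lagrange)
  then have "collinear {0, cross3 u w, a}" using cross_eq_0
    by (metis insert_commute)
  then show ?thesis using assms(3) collinear_lemma[of "cross3 u w" a] by auto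
qed

lemma L1:
  fixes a c :: "real^3"
  assumes "a \<noteq> 0" "c \<noteq> 0" "{x. a \<bullet> x = b} = {x. c \<bullet> x = d}"
  shows "\<exists>k. c = k *\<^sub>R a"
proof -
  define x0 where "x0 = (b / (a \<bullet> a)) *\<^sub>R a"
  define v where "v = c - ((c \<bullet> a) / (a \<bullet> a)) *\<^sub>R a"
  have aa: "a \<bullet> a \<noteq> 0" using assms by simp
  have av: "a \<bullet> v = 0" using aa by (simp add: v_def inner_diff_right inner_commute)
  have "a \<bullet> x0 = b" using aa by (simp add: x0_def)
  then have 1: "c \<bullet> x0 = d" using assms(3) by blast
  have "a \<bullet> (x0 + v) = b" using \<open>a \<bullet> x0 = b\<close> av by (simp add: inner_add_right)
  then have "c \<bullet> (x0 + v) = d" using assms(3) by blast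
  then have cv: "c \<bullet> v = 0" using 1 by (simp add: inner_add_right)
  have "v \<bullet> v = c \<bullet> v - ((c \<bullet> a) / (a \<bullet> a)) * (a \<bullet> v)"
    by (simp add: v_def inner_diff_left inner_commute)
  then have "v = 0" using cv av by simp
  then show ?thesis unfolding v_def by (metis eq_iff_diff_eq_0)
qed

lemma L3:
  fixes a n p :: "real^3"
  assumes "a \<noteq> 0" "a = k *\<^sub>R n" "H = {x. a \<bullet> x = b}" "p \<in> H"
  shows "H = {x. n \<bullet> x = n \<bullet> p}"
proof -
  have k: "k \<noteq> 0" using assms by auto
  have "b = k * (n \<bullet> p)" using assms by simp
  then show ?thesis using assms k by auto
qed


lemma dc: "(cross3 x y) \<bullet> x = 0" "(cross3 x y) \<bullet> y = 0" "x \<bullet> cross3 x y = 0" "y \<bullet> cross3 x y = 0"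
  by (simp_all add: dot_cross_self inner_commute)

lemma inH: "n \<bullet> (y - x) = 0 \<Longrightarrow> y \<in> {z. n \<bullet> z = n \<bullet> (x::real^3)}"
  by (simp add: inner_diff_right)

theorem mainTheorem7:
  fixes A1 A2 A3 :: "(real^3) set"
  assumes "finite A1" "finite A2" "finite A3"
    and "card A1 = 3" "card A2 = 2" "card A3 = 1"
    and "card (A1 \<union> A2 \<union> A3) = 6"
    and "general_position (A1 \<union> A2 \<union> A3)"
  shows "\<exists>!(H1, H2, H3). affine_plane H1 \<and> affine_plane H2 \<and> affine_plane H3 \<and>
           mutually_orth_planes H1 H2 H3 \<and> A1 \<subseteq> H1 \<and> A2 \<subseteq> H2 \<and> A3 \<subseteq> H3"
proof -
  obtain p1 p2 p3 where A1: "A1 = {p1,p2,p3}" using assms(4) card_3_iff by metis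
  obtain p q where A2: "A2 = {p,q}" using assms(5) card_2_iff by metis
  obtain r where A3: "A3 = {r}" using assms(6) by (auto simp: card_1_singleton_iff)
  define X where "X = A1 \<union> A2 \<union> A3"
  have Xs: "X = set [p1,p2,p3,p,q,r]" unfolding X_def A1 A2 A3 by auto
  have "distinct [p1,p2,p3,p,q,r]"
    by (rule card_distinct) (use assms(7) Xs X_def in simp)
  then have dist: "p1 \<noteq> p2" "p1 \<noteq> p3" "p2 \<noteq> p3" "p \<noteq> q" "p \<noteq> r" "q \<noteq> r" by auto
  have gp: "general_position X" using assms(8) X_def by simp
  have cardX: "card X = 6" using assms(7) X_def by simp
  have nc1: "\<not> collinear {p1,p2,p3}"
    using gp unfolding general_position_def using assms(4) X_def A1 by blast
  have nc2: "\<not> collinear {p,q,r}"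
  proof -
    have "{p,q,r} \<subseteq> X" "card {p,q,r} = 3" using dist X_def A2 A3 by auto
    then show ?thesis using gp unfolding general_position_def by blast
  qed
  define u where "u = p2 - p1"
  define w where "w = p3 - p1"
  define n1 where "n1 = cross3 u w"
  have n1: "n1 \<noteq> 0"
  proof
    assume "n1 = 0"
    then have "collinear {0, u, w}" using cross_eq_0 n1_def by simp
    then have "collinear {p2,p1,p3}" using collinear_3[of p2 p1 p3] u_def w_def by simp
    then show False using nc1 by (simp add: insert_commute)
  qed
  define n2 where "n2 = cross3 n1 (q - p)"
  define P1 where "P1 = {x. n1 \<bullet> x = n1 \<bullet> p1}"
  have P1: "p1 \<in> P1" "p2 \<in> P1" "p3 \<in> P1"
    unfolding P1_def using inH[of n1 p2 p1] inH[of n1 p3 p1] dc[of u w]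
    by (auto simp: n1_def u_def w_def)
  have n2: "n2 \<noteq> 0"
  proof
    assume "n2 = 0"
    then have "collinear {0, n1, q - p}" using cross_eq_0 n2_def by simp
    then have qp: "q - p \<noteq> 0" using dist by simp
    obtain t where t: "q - p = t *\<^sub>R n1" using collinear_lemma[of n1 "q - p"] n1 qp \<open>collinear {0, n1, q - p}\<close> by blast
    define m where "m = cross3 n1 (r - p)"
    show False
    proof (cases "m = 0")
      case True
      then have "collinear {0, n1, r - p}" using cross_eq_0 m_def by simp
      then have rp: "r - p \<noteq> 0" using dist by simp
      obtain s where s: "r - p = s *\<^sub>R n1" using collinear_lemma[of n1 "r - p"] n1 rp \<open>collinear {0, n1, r - p}\<close> by blast
      have t0: "t \<noteq> 0" using t dist by auto
      have "r - p = (s / t) *\<^sub>R (q - p)" using t s t0 by simp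
      then have "collinear {0, q - p, r - p}" using collinear_lemma by blast
      then have "collinear {q,p,r}" using collinear_3[of q p r] by simp
      then show False using nc2 by (simp add: insert_commute)
    next
      case False
      define K where "K = {x. m \<bullet> x = m \<bullet> p}"
      have o: "orth_planes P1 K" unfolding orth_planes_def P1_def K_def
        using n1 False dc(3)[of n1 "r - p"] m_def by blast
      have "m \<bullet> (q - p) = 0" using t dc(1)[of n1 "r-p"] m_def by simp
      then have "q \<in> K" unfolding K_def by (rule inH)
      moreover have "r \<in> K" unfolding K_def by (rule inH) (use dc(2)[of n1 "r-p"] m_def in simp)
      moreover have "p \<in> K" unfolding K_def by simp
      ultimately have "X \<subseteq> P1 \<union> K" using P1 X_def A1 A2 A3 by auto
      then show False using gp o cardX unfolding general_position_def by blast
    qed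
  qed
  define n3 where "n3 = cross3 n1 n2"
  have n12: "n1 \<bullet> n2 = 0" using dc n2_def by simp
  have n3: "n3 \<noteq> 0"
  proof
    assume "n3 = 0"
    then have "(norm n1)\<^sup>2 * (norm n2)\<^sup>2 = 0" using norm_cross[of n1 n2] n12 n3_def by simp
    then show False using n1 n2 by simp
  qed
  define P2 where "P2 = {x. n2 \<bullet> x = n2 \<bullet> p}"
  define P3 where "P3 = {x. n3 \<bullet> x = n3 \<bullet> r}"
  have P2: "p \<in> P2" "q \<in> P2"
    unfolding P2_def using inH[of n2 q p] dc[of n1 "q-p"] by (auto simp: n2_def)
  have exi: "affine_plane P1 \<and> affine_plane P2 \<and> affine_plane P3 \<and>
           mutually_orth_planes P1 P2 P3 \<and> A1 \<subseteq> P1 \<and> A2 \<subseteq> P2 \<and> A3 \<subseteq> P3"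
  proof (intro conjI)
    show "affine_plane P1" unfolding affine_plane_def P1_def using n1 by blast
    show "affine_plane P2" unfolding affine_plane_def P2_def using n2 by blast
    show "affine_plane P3" unfolding affine_plane_def P3_def using n3 by blast
    have "n1 \<bullet> n3 = 0" "n2 \<bullet> n3 = 0" using dc n3_def by auto
    then show "mutually_orth_planes P1 P2 P3"
      unfolding mutually_orth_planes_def orth_planes_def P1_def P2_def P3_def
      using n1 n2 n3 n12 by blast
    show "A1 \<subseteq> P1" using P1 A1 by auto
    show "A2 \<subseteq> P2" using P2 A2 by auto
    show "A3 \<subseteq> P3" using A3 P3_def by auto
  qed
  have uniq: "H1 = P1 \<and> H2 = P2 \<and> H3 = P3"
    if h: "affine_plane H1 \<and> affine_plane H2 \<and> affine_plane H3 \<and>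
           mutually_orth_planes H1 H2 H3 \<and> A1 \<subseteq> H1 \<and> A2 \<subseteq> H2 \<and> A3 \<subseteq> H3" for H1 H2 H3
  proof -
    from h have o12: "orth_planes H1 H2" and o13: "orth_planes H1 H3" and o23: "orth_planes H2 H3"
      unfolding mutually_orth_planes_def by auto
    have inA: "p1 \<in> H1" "p2 \<in> H1" "p3 \<in> H1" "p \<in> H2" "q \<in> H2" "r \<in> H3"
      using h A1 A2 A3 by auto
    obtain a b c d where abcd: "a \<noteq> 0" "c \<noteq> 0" "H1 = {x. a \<bullet> x = b}"
      "H2 = {x. c \<bullet> x = d}" "a \<bullet> c = 0"
      using o12 unfolding orth_planes_def by blast
    have "a \<bullet> u = 0" "a \<bullet> w = 0" using inA abcd unfolding u_def w_def
      by (auto simp: inner_diff_right)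
    then obtain k where k: "a = k *\<^sub>R n1" using L2 n1 n1_def by blast
    have H1: "H1 = P1" using L3[OF abcd(1) k abcd(3) inA(1)] P1_def by simp
    have k0: "k \<noteq> 0" using k abcd by auto
    have "c \<bullet> n1 = 0" using abcd(5) k k0 by (simp add: inner_commute)
    moreover have "c \<bullet> (q - p) = 0" using inA abcd by (auto simp: inner_diff_right)
    ultimately obtain k2 where k2: "c = k2 *\<^sub>R n2" using L2 n2 n2_def by blast
    have H2: "H2 = P2" using L3[OF abcd(2) k2 abcd(4) inA(4)] P2_def by simp
    obtain a' b' e f where e: "a' \<noteq> 0" "e \<noteq> 0" "H1 = {x. a' \<bullet> x = b'}"
      "H3 = {x. e \<bullet> x = f}" "a' \<bullet> e = 0"
      using o13 unfolding orth_planes_def by blast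
    obtain k3 where k3: "a' = k3 *\<^sub>R n1" using L1[OF n1 e(1)] e(3) H1 P1_def by metis
    have "k3 \<noteq> 0" using k3 e by auto
    then have en1: "e \<bullet> n1 = 0" using e(5) k3 by (simp add: inner_commute)
    obtain c' d' e' f' where e': "c' \<noteq> 0" "e' \<noteq> 0" "H2 = {x. c' \<bullet> x = d'}"
      "H3 = {x. e' \<bullet> x = f'}" "c' \<bullet> e' = 0"
      using o23 unfolding orth_planes_def by blast
    obtain k4 where k4: "c' = k4 *\<^sub>R n2" using L1[OF n2 e'(1)] e'(3) H2 P2_def by metis
    have "k4 \<noteq> 0" using k4 e' by auto
    then have "e' \<bullet> n2 = 0" using e'(5) k4 by (simp add: inner_commute)
    moreover obtain k5 where k5: "e' = k5 *\<^sub>R e" using L1[OF e(2) e'(2)] e(4) e'(4) by metis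
    moreover have "k5 \<noteq> 0" using k5 e' by auto
    ultimately have "e \<bullet> n2 = 0" by simp
    then obtain k6 where k6: "e = k6 *\<^sub>R n3" using L2 en1 n3 n3_def by blast
    have H3: "H3 = P3" using L3[OF e(2) k6 e(4) inA(6)] P3_def by simp
    show ?thesis using H1 H2 H3 by simp
  qed
  show ?thesis
    apply (rule ex1I[where a="(P1,P2,P3)"])
    using exi apply simp
    using uniq by auto
qed

end
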